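(* Let $A$ and $B$ be isoclinic finite groups. If $A$ is weakly-top, then $B$ is weakly-top. If $A$ is top, then $B$ is top.
   Context: For a group $H$, $H'$ denotes its commutator subgroup and $Z(H)$ its center. A finite group $G$ is weakly-top if $|H/H'| \leq |G/G'|$ for every proper subgroup $H<G$, and top if $|H/H'| < |G/G'|$ for every proper subgroup $H<G$. In every group $G$ the commutator map induces a well-defined surjective map $\theta_G : G/Z(G) \times G/Z(G) \to G'$, $(xZ(G),yZ(G)) \mapsto [x,y]=x^{-1}y^{-1}xy$. Two groups $A$ and $B$ are isoclinic (in the sense of P. Hall) if there exist isomorphisms $\phi : A' \to B'$ and $\psi : A/Z(A) \to B/Z(B)$ such that $\phi(\theta_A(u,v)) = \theta_B(\psi(u),\psi(v))$ for all $u,v \in A/Z(A)$. *)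

theory Defs
  imports "HOL-Algebra.Algebra"
begin

definition comm :: "('a, 'b) monoid_scheme \<Rightarrow> 'a \<Rightarrow> 'a \<Rightarrow> 'a" where
  "comm G x y = inv\<^bsub>G\<^esub> x \<otimes>\<^bsub>G\<^esub> inv\<^bsub>G\<^esub> y \<otimes>\<^bsub>G\<^esub> x \<otimes>\<^bsub>G\<^esub> y"

definition commutator_subgroup :: "('a, 'b) monoid_scheme \<Rightarrow> 'a set" where
  "commutator_subgroup G = derived G (carrier G)"

definition center :: "('a, 'b) monoid_scheme \<Rightarrow> 'a set" where
  "center G = {z \<in> carrier G. \<forall>x \<in> carrier G. z \<otimes>\<^bsub>G\<^esub> x = x \<otimes>\<^bsub>G\<^esub> z}"

definition abel_order :: "('a, 'b) monoid_scheme \<Rightarrow> nat" where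
  "abel_order G = card (carrier (G Mod commutator_subgroup G))"

text \<open>The commutator map theta_G : G/Z(G) x G/Z(G) -> G', via representatives.\<close>
definition theta :: "('a, 'b) monoid_scheme \<Rightarrow> 'a set \<Rightarrow> 'a set \<Rightarrow> 'a" where
  "theta G u v = comm G (SOME x. x \<in> u) (SOME y. y \<in> v)"

definition weakly_top :: "('a, 'b) monoid_scheme \<Rightarrow> bool" where
  "weakly_top G \<longleftrightarrow> (\<forall>H. subgroup H G \<and> H \<noteq> carrier G \<longrightarrow>
      abel_order (G\<lparr>carrier := H\<rparr>) \<le> abel_order G)"

definition top_group :: "('a, 'b) monoid_scheme \<Rightarrow> bool" where
  "top_group G \<longleftrightarrow> (\<forall>H. subgroup H G \<and> H \<noteq> carrier G \<longrightarrow>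
      abel_order (G\<lparr>carrier := H\<rparr>) < abel_order G)"

definition isoclinic :: "('a, 'c) monoid_scheme \<Rightarrow> ('b, 'd) monoid_scheme \<Rightarrow> bool" where
  "isoclinic A B \<longleftrightarrow> (\<exists>\<phi> \<psi>.
      \<phi> \<in> iso (A\<lparr>carrier := commutator_subgroup A\<rparr>) (B\<lparr>carrier := commutator_subgroup B\<rparr>) \<and>
      \<psi> \<in> iso (A Mod center A) (B Mod center B) \<and>
      (\<forall>u \<in> carrier (A Mod center A). \<forall>v \<in> carrier (A Mod center A).
          \<phi> (theta A u v) = theta B (\<psi> u) (\<psi> v)))"

end

theory Submission imports Defs begin

lemma (in group) inv_cancel_left_simp [simp]:
  "a \<in> carrier G \<Longrightarrow> t \<in> carrier G \<Longrightarrow> inv a \<otimes> (a \<otimes> t) = t"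
  by (simp add: m_assoc[symmetric])

lemma (in group) inv_cancel_left_simp2 [simp]:
  "a \<in> carrier G \<Longrightarrow> t \<in> carrier G \<Longrightarrow> a \<otimes> (inv a \<otimes> t) = t"
  by (simp add: m_assoc[symmetric])

lemma center_subgroup:
  fixes G (structure)
  assumes "group G" shows "subgroup (center G) G"
proof -
  interpret group G by fact
  show ?thesis
  proof (rule subgroupI)
    show "center G \<subseteq> carrier G" by (auto simp: center_def)
    show "center G \<noteq> {}" by (auto simp: center_def intro!: exI[of _ \<one>])
  next
    fix a assume a: "a \<in> center G"
    hence ac: "a \<in> carrier G" and c: "\<forall>x\<in>carrier G. a \<otimes> x = x \<otimes> a" unfolding center_def by blast+
    have "inv a \<otimes> x = x \<otimes> inv a" if x: "x \<in> carrier G" for x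
    proof -
      have "a \<otimes> x = x \<otimes> a" using c x by auto
      have "inv a \<otimes> x = inv a \<otimes> (x \<otimes> a) \<otimes> inv a" using ac x by (simp add: m_assoc)
      also have "\<dots> = inv a \<otimes> (a \<otimes> x) \<otimes> inv a" using \<open>a \<otimes> x = x \<otimes> a\<close> by simp
      also have "\<dots> = x \<otimes> inv a" using ac x by (simp add: m_assoc)
      finally show ?thesis .
    qed
    thus "inv a \<in> center G" using ac unfolding center_def by blast
  next
    fix a b assume "a \<in> center G" "b \<in> center G"
    then have ac: "a \<in> carrier G" and bc: "b \<in> carrier G"
      and ca: "\<And>x. x \<in> carrier G \<Longrightarrow> a \<otimes> x = x \<otimes> a"
      and cb: "\<And>x. x \<in> carrier G \<Longrightarrow> b \<otimes> x = x \<otimes> b" unfolding center_def by blast+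
    have "a \<otimes> b \<otimes> x = x \<otimes> (a \<otimes> b)" if x: "x \<in> carrier G" for x
    proof -
      have "a \<otimes> b \<otimes> x = a \<otimes> (b \<otimes> x)" using ac bc x by (simp add: m_assoc)
      also have "\<dots> = a \<otimes> (x \<otimes> b)" using cb[OF x] by simp
      also have "\<dots> = (a \<otimes> x) \<otimes> b" using ac bc x by (simp add: m_assoc)
      also have "\<dots> = (x \<otimes> a) \<otimes> b" using ca[OF x] by simp
      also have "\<dots> = x \<otimes> (a \<otimes> b)" using ac bc x by (simp add: m_assoc)
      finally show ?thesis .
    qed
    thus "a \<otimes> b \<in> center G" using ac bc unfolding center_def by blast
  qed
qed

lemma center_normal:
  fixes G (structure)
  assumes "group G" shows "center G \<lhd> G"
proof -
  interpret group G by fact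
  show ?thesis unfolding normal_inv_iff
  proof (intro conjI ballI)
    show "subgroup (center G) G" by (rule center_subgroup[OF assms])
    fix x h assume x: "x \<in> carrier G" and h: "h \<in> center G"
    hence hc: "h \<in> carrier G" and "h \<otimes> x = x \<otimes> h" unfolding center_def by blast+
    hence "x \<otimes> h \<otimes> inv x = h \<otimes> x \<otimes> inv x" by simp
    hence "x \<otimes> h \<otimes> inv x = h" using x hc by (simp add: m_assoc)
    thus "x \<otimes> h \<otimes> inv x \<in> center G" using h by simp
  qed
qed

lemma comm_central:
  fixes G (structure)
  assumes "group G" "x \<in> carrier G" "y \<in> carrier G" "z \<in> center G" "w \<in> center G"
  shows "comm G (z \<otimes>\<^bsub>G\<^esub> x) (w \<otimes>\<^bsub>G\<^esub> y) = comm G x y"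
proof -
  interpret group G by fact
  have zc: "z \<in> carrier G" and zz: "\<And>a. a \<in> carrier G \<Longrightarrow> z \<otimes> a = a \<otimes> z"
    using assms(4) unfolding center_def by blast+
  have wc: "w \<in> carrier G" and ww: "\<And>a. a \<in> carrier G \<Longrightarrow> w \<otimes> a = a \<otimes> w"
    using assms(5) unfolding center_def by blast+
  have x: "x \<in> carrier G" and y: "y \<in> carrier G" using assms by auto
  have "comm G (z \<otimes> x) (w \<otimes> y) = inv x \<otimes> inv z \<otimes> (inv y \<otimes> inv w) \<otimes> (z \<otimes> x) \<otimes> (w \<otimes> y)"
    unfolding comm_def using x y zc wc by (simp add: inv_mult_group)
  also have "\<dots> = inv x \<otimes> inv y \<otimes> (inv z \<otimes> z) \<otimes> (inv w \<otimes> w) \<otimes> x \<otimes> y"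
  proof -
    have iz: "\<And>a. a \<in> carrier G \<Longrightarrow> inv z \<otimes> a = a \<otimes> inv z"
      using center_subgroup[OF assms(1)] assms(4) unfolding center_def by (blast dest: subgroup.m_inv_closed)
    have iw: "\<And>a. a \<in> carrier G \<Longrightarrow> inv w \<otimes> a = a \<otimes> inv w"
      using center_subgroup[OF assms(1)] assms(5) unfolding center_def by (blast dest: subgroup.m_inv_closed)
    have "inv x \<otimes> inv z \<otimes> (inv y \<otimes> inv w) \<otimes> (z \<otimes> x) \<otimes> (w \<otimes> y)
        = inv x \<otimes> (inv z \<otimes> inv y) \<otimes> inv w \<otimes> z \<otimes> x \<otimes> w \<otimes> y"
      using x y zc wc by (simp add: m_assoc)
    also have "\<dots> = inv x \<otimes> (inv y \<otimes> inv z) \<otimes> inv w \<otimes> z \<otimes> x \<otimes> w \<otimes> y"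
      using iz[of "inv y"] y by simp
    also have "\<dots> = inv x \<otimes> inv y \<otimes> (inv z \<otimes> (inv w \<otimes> z)) \<otimes> x \<otimes> w \<otimes> y"
      using x y zc wc by (simp add: m_assoc)
    also have "\<dots> = inv x \<otimes> inv y \<otimes> (inv z \<otimes> (z \<otimes> inv w)) \<otimes> x \<otimes> w \<otimes> y"
      using iw[of z] zc by simp
    also have "\<dots> = inv x \<otimes> inv y \<otimes> (inv z \<otimes> z) \<otimes> (inv w \<otimes> (x \<otimes> w)) \<otimes> y"
      using x y zc wc by (simp add: m_assoc)
    also have "\<dots> = inv x \<otimes> inv y \<otimes> (inv z \<otimes> z) \<otimes> (inv w \<otimes> (w \<otimes> x)) \<otimes> y"
      using ww[of x] x by simp
    also have "\<dots> = inv x \<otimes> inv y \<otimes> (inv z \<otimes> z) \<otimes> (inv w \<otimes> w) \<otimes> x \<otimes> y"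
      using x y zc wc by (simp add: m_assoc)
    finally show ?thesis .
  qed
  also have "\<dots> = comm G x y" unfolding comm_def using x y zc wc by simp
  finally show ?thesis .
qed

lemma theta_rep:
  fixes G (structure)
  assumes "group G" "u \<in> carrier (G Mod center G)" "v \<in> carrier (G Mod center G)"
    "x \<in> u" "y \<in> v"
  shows "theta G u v = comm G x y"
proof -
  interpret group G by fact
  obtain a where a: "a \<in> carrier G" "u = center G #> a"
    using assms(2) by (auto simp: FactGroup_def RCOSETS_def)
  obtain b where b: "b \<in> carrier G" "v = center G #> b"
    using assms(3) by (auto simp: FactGroup_def RCOSETS_def)
  have key: "comm G x' y' = comm G a b" if xu: "x' \<in> u" and yv: "y' \<in> v" for x' y'
  proof -
    obtain z where "z \<in> center G" "x' = z \<otimes> a" using xu a by (auto simp: r_coset_def)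
    moreover obtain w where "w \<in> center G" "y' = w \<otimes> b" using yv b by (auto simp: r_coset_def)
    ultimately show ?thesis using comm_central[OF assms(1) a(1) b(1)] by simp
  qed
  have "(SOME x. x \<in> u) \<in> u" using assms(4) by (rule someI)
  moreover have "(SOME y. y \<in> v) \<in> v" using assms(5) by (rule someI)
  ultimately show ?thesis unfolding theta_def using key assms(4,5) by simp
qed

lemma abel_order_sub:
  fixes G (structure)
  assumes "group G" "finite (carrier G)" "subgroup H G"
  shows "abel_order (G\<lparr>carrier := H\<rparr>) * card (derived G H) = card H"
proof -
  interpret group G by fact
  have cs: "commutator_subgroup (G\<lparr>carrier := H\<rparr>) = derived G H"
    unfolding commutator_subgroup_def using derived_consistent[OF _ assms(3)] by simp
  interpret H: group "G\<lparr>carrier := H\<rparr>" using subgroup_imp_group[OF assms(3)] .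
  have "subgroup (derived G H) (G\<lparr>carrier := H\<rparr>)"
    using derived_subgroup_is_normal[OF assms(3)] normal_imp_subgroup by blast
  from H.lagrange[OF this] show ?thesis
    unfolding abel_order_def cs by (simp add: FactGroup_def order_def)
qed

lemma abel_order_whole:
  fixes G (structure)
  assumes "group G" "finite (carrier G)"
  shows "abel_order G * card (derived G (carrier G)) = card (carrier G)"
  using abel_order_sub[OF assms group.subgroup_self[OF assms(1)]] by simp


lemma preimage_subgroup:
  assumes "group_hom G H f" "subgroup S H"
  shows "subgroup {x \<in> carrier G. f x \<in> S} G"
proof -
  interpret group_hom G H f by fact
  interpret S: subgroup S H by fact
  show ?thesis
  proof (rule G.subgroupI)
    show "{x \<in> carrier G. f x \<in> S} \<noteq> {}" by (auto intro!: exI[of _ "\<one>\<^bsub>G\<^esub>"])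
  qed auto
qed

lemma ds_comm:
  fixes G (structure)
  assumes "group G" "a \<in> carrier G" "b \<in> carrier G"
  shows "a \<otimes> b \<otimes> inv a \<otimes> inv b = comm G (inv a) (inv b)"
proof -
  interpret group G by fact
  show ?thesis unfolding comm_def using assms by simp
qed

lemma theta_coset:
  fixes G (structure)
  assumes "group G" "x \<in> carrier G" "y \<in> carrier G"
  shows "theta G (center G #> x) (center G #> y) = comm G x y"
proof -
  interpret group G by fact
  have s: "subgroup (center G) G" by (rule center_subgroup[OF assms(1)])
  show ?thesis
    by (rule theta_rep[OF assms(1)])
       (auto simp: carrier_FactGroup assms rcos_self[OF _ s])
qed


lemma key:
  assumes gA: "group A" and gB: "group B"
    and fA: "finite (carrier A)" and fB: "finite (carrier B)"
    and phi: "\<phi> \<in> iso (A\<lparr>carrier := commutator_subgroup A\<rparr>) (B\<lparr>carrier := commutator_subgroup B\<rparr>)"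
    and psi: "\<psi> \<in> iso (A Mod center A) (B Mod center B)"
    and th: "\<forall>u \<in> carrier (A Mod center A). \<forall>v \<in> carrier (A Mod center A).
          \<phi> (theta A u v) = theta B (\<psi> u) (\<psi> v)"
    and H: "subgroup H B" and Hne: "H \<noteq> carrier B"
  shows "abel_order (B\<lparr>carrier:=H\<rparr>) < abel_order B \<or>
     (\<exists>K. subgroup K A \<and> K \<noteq> carrier A \<and>
        abel_order (B\<lparr>carrier:=H\<rparr>) * card (center A) \<le> abel_order (A\<lparr>carrier:=K\<rparr>) * card (center B))"
proof -
  interpret A: group A by fact
  interpret B: group B by fact
  define ZA where "ZA = center A"
  define ZB where "ZB = center B"
  have nA: "ZA \<lhd> A" unfolding ZA_def by (rule center_normal[OF gA])
  have nB: "ZB \<lhd> B" unfolding ZB_def by (rule center_normal[OF gB])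
  have sA: "subgroup ZA A" using nA normal_imp_subgroup by blast
  have sB: "subgroup ZB B" using nB normal_imp_subgroup by blast
  interpret AZ: group "A Mod ZA" using normal.factorgroup_is_group[OF nA] .
  interpret BZ: group "B Mod ZB" using normal.factorgroup_is_group[OF nB] .
  have psi_hom: "\<psi> \<in> hom (A Mod ZA) (B Mod ZB)"
    and psi_bij: "bij_betw \<psi> (carrier (A Mod ZA)) (carrier (B Mod ZB))"
    using psi unfolding iso_def ZA_def ZB_def by auto
  interpret psiH: group_hom "A Mod ZA" "B Mod ZB" \<psi>
    by (simp add: group_hom_def group_hom_axioms_def psi_hom AZ.group_axioms BZ.group_axioms)
  define A' where "A' = derived A (carrier A)"
  define B' where "B' = derived B (carrier B)"
  have sA': "subgroup A' A" unfolding A'_def by (rule A.derived_is_subgroup) simp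
  have sB': "subgroup B' B" unfolding B'_def by (rule B.derived_is_subgroup) simp
  have phi_hom: "\<phi> \<in> hom (A\<lparr>carrier := A'\<rparr>) (B\<lparr>carrier := B'\<rparr>)"
    and phi_bij: "bij_betw \<phi> A' B'"
    using phi unfolding iso_def A'_def B'_def commutator_subgroup_def by auto
  interpret phiH: group_hom "A\<lparr>carrier := A'\<rparr>" "B\<lparr>carrier := B'\<rparr>" \<phi>
    by (simp add: group_hom_def group_hom_axioms_def phi_hom
          A.subgroup_imp_group[OF sA'] B.subgroup_imp_group[OF sB'])
  have hA: "(\<lambda>a. ZA #>\<^bsub>A\<^esub> a) \<in> hom A (A Mod ZA)" using normal.r_coset_hom_Mod[OF nA] .
  have hB: "(\<lambda>a. ZB #>\<^bsub>B\<^esub> a) \<in> hom B (B Mod ZB)" using normal.r_coset_hom_Mod[OF nB] .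
  interpret hBH: group_hom B "B Mod ZB" "\<lambda>a. ZB #>\<^bsub>B\<^esub> a"
    by (simp add: group_hom_def group_hom_axioms_def hB B.group_axioms BZ.group_axioms)
  define C where "C = (\<lambda>h. ZB #>\<^bsub>B\<^esub> h) ` H"
  define K where "K = {a \<in> carrier A. \<psi> (ZA #>\<^bsub>A\<^esub> a) \<in> C}"
  have C_sub: "subgroup C (B Mod ZB)"
    unfolding C_def by (rule hBH.subgroup_img_is_subgroup[OF H])
  have fhom: "\<psi> \<circ> (\<lambda>a. ZA #>\<^bsub>A\<^esub> a) \<in> hom A (B Mod ZB)"
    by (rule hom_compose[OF hA psi_hom])
  have K_sub: "subgroup K A"
  proof -
    have "group_hom A (B Mod ZB) (\<psi> \<circ> (\<lambda>a. ZA #>\<^bsub>A\<^esub> a))"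
      by (simp add: group_hom_def group_hom_axioms_def fhom A.group_axioms BZ.group_axioms)
    from preimage_subgroup[OF this C_sub] show ?thesis unfolding K_def by simp
  qed
  have KA: "K \<subseteq> carrier A" unfolding K_def by auto
  have ZK: "ZA \<subseteq> K"
  proof
    fix z assume z: "z \<in> ZA"
    have zc: "z \<in> carrier A" using z sA subgroup.subset by blast
    have "ZA #>\<^bsub>A\<^esub> z = ZA" using subgroup.rcos_const[OF sA gA z] .
    hence "\<psi> (ZA #>\<^bsub>A\<^esub> z) = \<one>\<^bsub>B Mod ZB\<^esub>" using psiH.hom_one by simp
    also have "\<dots> = ZB #>\<^bsub>B\<^esub> \<one>\<^bsub>B\<^esub>" using sB subgroup.subset by auto
    also have "\<dots> \<in> C" unfolding C_def using subgroup.one_closed[OF H] by blast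
    finally show "z \<in> K" unfolding K_def using zc by blast
  qed
  have ZA_fin: "finite ZA" using sA subgroup.subset fA finite_subset by blast
  have cardK: "card K = card ZA * card ((\<lambda>a. ZA #>\<^bsub>A\<^esub> a) ` K)"
  proof -
    interpret AK: group "A\<lparr>carrier := K\<rparr>" using A.subgroup_imp_group[OF K_sub] .
    have sub: "subgroup ZA (A\<lparr>carrier := K\<rparr>)" using A.subgroup_incl[OF sA K_sub ZK] .
    have r: "rcosets\<^bsub>A\<lparr>carrier := K\<rparr>\<^esub> ZA = (\<lambda>a. ZA #>\<^bsub>A\<^esub> a) ` K"
      unfolding RCOSETS_def r_coset_def by auto
    from AK.lagrange[OF sub, unfolded r] show ?thesis
      by (simp add: order_def mult.commute)
  qed
  have img: "\<psi> ` (\<lambda>a. ZA #>\<^bsub>A\<^esub> a) ` K = C"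
  proof
    show "\<psi> ` (\<lambda>a. ZA #>\<^bsub>A\<^esub> a) ` K \<subseteq> C" unfolding K_def by auto
  next
    show "C \<subseteq> \<psi> ` (\<lambda>a. ZA #>\<^bsub>A\<^esub> a) ` K"
    proof
      fix c assume c: "c \<in> C"
      then obtain h where h: "h \<in> H" "c = ZB #>\<^bsub>B\<^esub> h" unfolding C_def by blast
      have "c \<in> carrier (B Mod ZB)" using h subgroup.subset[OF H] by (auto simp: carrier_FactGroup)
      then obtain u where u: "u \<in> carrier (A Mod ZA)" "\<psi> u = c"
        using psi_bij unfolding bij_betw_def by (metis imageE)
      then obtain a where a: "a \<in> carrier A" "u = ZA #>\<^bsub>A\<^esub> a" by (auto simp: carrier_FactGroup)
      have "a \<in> K" unfolding K_def using a u c by auto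
      thus "c \<in> \<psi> ` (\<lambda>a. ZA #>\<^bsub>A\<^esub> a) ` K" using a u by blast
    qed
  qed
  have cardC: "card ((\<lambda>a. ZA #>\<^bsub>A\<^esub> a) ` K) = card C"
  proof -
    have "(\<lambda>a. ZA #>\<^bsub>A\<^esub> a) ` K \<subseteq> carrier (A Mod ZA)" using KA by (auto simp: carrier_FactGroup)
    hence "inj_on \<psi> ((\<lambda>a. ZA #>\<^bsub>A\<^esub> a) ` K)"
      using psi_bij unfolding bij_betw_def by (metis inj_on_subset)
    from card_image[OF this] img show ?thesis by simp
  qed
  have cardH: "card H \<le> card ZB * card C"
  proof -
    have Csub: "C \<subseteq> rcosets\<^bsub>B\<^esub> ZB" unfolding C_def using subgroup.subset[OF H]
      by (auto intro: B.rcosetsI[OF subgroup.subset[OF sB]])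
    have UC: "\<Union>C \<subseteq> carrier B" using Csub B.rcosets_part_G[OF sB] by blast
    have "H \<subseteq> \<Union>C" unfolding C_def using subgroup.subset[OF H] B.rcos_self[OF _ sB] by blast
    hence "card H \<le> card (\<Union>C)" using UC fB by (meson card_mono finite_subset)
    also have "\<dots> \<le> sum card C" by (rule card_Union_le_sum_card)
    also have "\<dots> = sum (\<lambda>_. card ZB) C"
      by (rule sum.cong) (use Csub B.card_rcosets_equal[OF _ subgroup.subset[OF sB]] in auto)
    also have "\<dots> = card ZB * card C" by simp
    finally show ?thesis .
  qed
  have piA: "\<And>x. x \<in> carrier A \<Longrightarrow> ZA #>\<^bsub>A\<^esub> x \<in> carrier (A Mod ZA)"
    by (auto simp: carrier_FactGroup)
  have ds: "\<phi> ` derived_set A K = derived_set B H"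
  proof
    show "\<phi> ` derived_set A K \<subseteq> derived_set B H"
    proof
      fix e assume "e \<in> \<phi> ` derived_set A K"
      then obtain k1 k2 where k: "k1 \<in> K" "k2 \<in> K"
        and e: "e = \<phi> (k1 \<otimes>\<^bsub>A\<^esub> k2 \<otimes>\<^bsub>A\<^esub> inv\<^bsub>A\<^esub> k1 \<otimes>\<^bsub>A\<^esub> inv\<^bsub>A\<^esub> k2)" by blast
      have kc: "k1 \<in> carrier A" "k2 \<in> carrier A" using k KA by auto
      have ik: "inv\<^bsub>A\<^esub> k1 \<in> K" "inv\<^bsub>A\<^esub> k2 \<in> K" using k subgroup.m_inv_closed[OF K_sub] by auto
      then obtain h1 h2 where h: "h1 \<in> H" "h2 \<in> H"
        "\<psi> (ZA #>\<^bsub>A\<^esub> inv\<^bsub>A\<^esub> k1) = ZB #>\<^bsub>B\<^esub> h1"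
        "\<psi> (ZA #>\<^bsub>A\<^esub> inv\<^bsub>A\<^esub> k2) = ZB #>\<^bsub>B\<^esub> h2"
        unfolding K_def C_def by blast
      have hc: "h1 \<in> carrier B" "h2 \<in> carrier B" using h(1,2) subgroup.subset[OF H] by auto
      have "e = \<phi> (theta A (ZA #>\<^bsub>A\<^esub> inv\<^bsub>A\<^esub> k1) (ZA #>\<^bsub>A\<^esub> inv\<^bsub>A\<^esub> k2))"
        unfolding e ZA_def using ds_comm[OF gA kc] theta_coset[OF gA] kc by simp
      also have "\<dots> = theta B (ZB #>\<^bsub>B\<^esub> h1) (ZB #>\<^bsub>B\<^esub> h2)"
        using th piA kc h(3,4) unfolding ZA_def by simp
      also have "\<dots> = comm B h1 h2" unfolding ZB_def using theta_coset[OF gB hc] .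
      also have "\<dots> = inv\<^bsub>B\<^esub> h1 \<otimes>\<^bsub>B\<^esub> inv\<^bsub>B\<^esub> h2 \<otimes>\<^bsub>B\<^esub> inv\<^bsub>B\<^esub> (inv\<^bsub>B\<^esub> h1) \<otimes>\<^bsub>B\<^esub> inv\<^bsub>B\<^esub> (inv\<^bsub>B\<^esub> h2)"
        using ds_comm[OF gB B.inv_closed[OF hc(1)] B.inv_closed[OF hc(2)]] hc by simp
      finally show "e \<in> derived_set B H"
        using h(1,2) subgroup.m_inv_closed[OF H] by blast
    qed
  next
    show "derived_set B H \<subseteq> \<phi> ` derived_set A K"
    proof
      fix e assume "e \<in> derived_set B H"
      then obtain h1 h2 where h: "h1 \<in> H" "h2 \<in> H"
        and e: "e = h1 \<otimes>\<^bsub>B\<^esub> h2 \<otimes>\<^bsub>B\<^esub> inv\<^bsub>B\<^esub> h1 \<otimes>\<^bsub>B\<^esub> inv\<^bsub>B\<^esub> h2" by blast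
      have hc: "h1 \<in> carrier B" "h2 \<in> carrier B" using h subgroup.subset[OF H] by auto
      have "ZB #>\<^bsub>B\<^esub> inv\<^bsub>B\<^esub> h1 \<in> C" "ZB #>\<^bsub>B\<^esub> inv\<^bsub>B\<^esub> h2 \<in> C"
        unfolding C_def using h subgroup.m_inv_closed[OF H] by auto
      then obtain k1 k2 where k: "k1 \<in> K" "k2 \<in> K"
        "ZB #>\<^bsub>B\<^esub> inv\<^bsub>B\<^esub> h1 = \<psi> (ZA #>\<^bsub>A\<^esub> k1)"
        "ZB #>\<^bsub>B\<^esub> inv\<^bsub>B\<^esub> h2 = \<psi> (ZA #>\<^bsub>A\<^esub> k2)"
        unfolding img[symmetric] by blast
      have kc: "k1 \<in> carrier A" "k2 \<in> carrier A" using k KA by auto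
      have "e = theta B (ZB #>\<^bsub>B\<^esub> inv\<^bsub>B\<^esub> h1) (ZB #>\<^bsub>B\<^esub> inv\<^bsub>B\<^esub> h2)"
        unfolding e ZB_def using ds_comm[OF gB hc] theta_coset[OF gB] hc by simp
      also have "\<dots> = \<phi> (theta A (ZA #>\<^bsub>A\<^esub> k1) (ZA #>\<^bsub>A\<^esub> k2))"
        using th piA kc k(3,4) unfolding ZA_def by simp
      also have "\<dots> = \<phi> (comm A k1 k2)" unfolding ZA_def using theta_coset[OF gA kc] by simp
      also have "comm A k1 k2 = inv\<^bsub>A\<^esub> k1 \<otimes>\<^bsub>A\<^esub> inv\<^bsub>A\<^esub> k2 \<otimes>\<^bsub>A\<^esub> inv\<^bsub>A\<^esub> (inv\<^bsub>A\<^esub> k1) \<otimes>\<^bsub>A\<^esub> inv\<^bsub>A\<^esub> (inv\<^bsub>A\<^esub> k2)"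
        using ds_comm[OF gA A.inv_closed[OF kc(1)] A.inv_closed[OF kc(2)]] kc by simp
      finally show "e \<in> \<phi> ` derived_set A K"
        using k(1,2) subgroup.m_inv_closed[OF K_sub] by blast
    qed
  qed
  have dsA: "derived_set A K \<subseteq> A'"
  proof -
    have "derived_set A K \<subseteq> derived_set A (carrier A)" using A.mono_derived_set[OF KA] .
    also have "\<dots> \<subseteq> A'" unfolding A'_def derived_def by (auto intro: generate.incl)
    finally show ?thesis .
  qed
  have dsB: "derived_set B H \<subseteq> B'"
  proof -
    have "derived_set B H \<subseteq> derived_set B (carrier B)" using B.mono_derived_set[OF subgroup.subset[OF H]] .
    also have "\<dots> \<subseteq> B'" unfolding B'_def derived_def by (auto intro: generate.incl)
    finally show ?thesis .
  qed
  have der: "derived B H = \<phi> ` derived A K"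
  proof -
    have "derived B H = generate B (derived_set B H)" by (simp add: derived_def)
    also have "\<dots> = generate (B\<lparr>carrier := B'\<rparr>) (derived_set B H)"
      using B.generate_consistent[OF dsB sB'] by simp
    also have "\<dots> = generate (B\<lparr>carrier := B'\<rparr>) (\<phi> ` derived_set A K)" using ds by simp
    also have "\<dots> = \<phi> ` generate (A\<lparr>carrier := A'\<rparr>) (derived_set A K)"
      using phiH.generate_img dsA by simp
    also have "\<dots> = \<phi> ` generate A (derived_set A K)"
      using A.generate_consistent[OF dsA sA'] by simp
    finally show ?thesis by (simp add: derived_def)
  qed
  have dAK: "derived A K \<subseteq> A'" unfolding A'_def using A.mono_derived[OF KA] .
  have card_der: "card (derived B H) = card (derived A K)"
  proof -
    have "inj_on \<phi> (derived A K)" using phi_bij dAK unfolding bij_betw_def by (metis inj_on_subset)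
    thus ?thesis using der card_image by simp
  qed
  have dpos: "card (derived A K) > 0"
  proof -
    have "subgroup (derived A K) A" using A.derived_is_subgroup[OF KA] .
    hence "\<one>\<^bsub>A\<^esub> \<in> derived A K" by (rule subgroup.one_closed)
    moreover have "finite (derived A K)" using dAK sA' subgroup.subset fA finite_subset by metis
    ultimately show ?thesis by (simp add: card_gt_0_iff) blast
  qed
  have eH: "abel_order (B\<lparr>carrier:=H\<rparr>) * card (derived A K) = card H"
    using abel_order_sub[OF gB fB H] card_der by simp
  have eK: "abel_order (A\<lparr>carrier:=K\<rparr>) * card (derived A K) = card K"
    using abel_order_sub[OF gA fA K_sub] .
  show ?thesis
  proof (cases "K = carrier A")
    case True
    have "derived B H = B'" using der True phi_bij unfolding A'_def bij_betw_def by simp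
    hence eH': "abel_order (B\<lparr>carrier:=H\<rparr>) * card B' = card H"
      using abel_order_sub[OF gB fB H] by simp
    have eB: "abel_order B * card B' = card (carrier B)"
      using abel_order_whole[OF gB fB] unfolding B'_def .
    have "card H < card (carrier B)"
      using Hne subgroup.subset[OF H] fB by (meson psubsetI psubset_card_mono)
    hence "abel_order (B\<lparr>carrier:=H\<rparr>) * card B' < abel_order B * card B'" using eH' eB by simp
    hence "abel_order (B\<lparr>carrier:=H\<rparr>) < abel_order B" by (meson mult_less_cancel2)
    thus ?thesis by blast
  next
    case False
    have "abel_order (B\<lparr>carrier:=H\<rparr>) * card ZA * card (derived A K)
        \<le> abel_order (A\<lparr>carrier:=K\<rparr>) * card ZB * card (derived A K)"
    proof -
      have "abel_order (B\<lparr>carrier:=H\<rparr>) * card ZA * card (derived A K) = card H * card ZA"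
        using eH by (metis mult.assoc mult.commute)
      also have "\<dots> \<le> card ZB * card C * card ZA" using cardH by simp
      also have "\<dots> = card K * card ZB" using cardK cardC by simp
      also have "\<dots> = abel_order (A\<lparr>carrier:=K\<rparr>) * card ZB * card (derived A K)"
        using eK by (metis mult.assoc mult.commute)
      finally show ?thesis .
    qed
    hence "abel_order (B\<lparr>carrier:=H\<rparr>) * card ZA \<le> abel_order (A\<lparr>carrier:=K\<rparr>) * card ZB"
      using dpos by simp
    thus ?thesis using K_sub False unfolding ZA_def ZB_def by blast
  qed
qed


lemma whole:
  assumes gA: "group A" and gB: "group B"
    and fA: "finite (carrier A)" and fB: "finite (carrier B)"
    and phi: "\<phi> \<in> iso (A\<lparr>carrier := commutator_subgroup A\<rparr>) (B\<lparr>carrier := commutator_subgroup B\<rparr>)"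
    and psi: "\<psi> \<in> iso (A Mod center A) (B Mod center B)"
  shows "abel_order B * card (center A) = abel_order A * card (center B)"
proof -
  interpret A: group A by fact
  interpret B: group B by fact
  define A' where "A' = derived A (carrier A)"
  define B' where "B' = derived B (carrier B)"
  have sA: "subgroup (center A) A" by (rule center_subgroup[OF gA])
  have sB: "subgroup (center B) B" by (rule center_subgroup[OF gB])
  have d: "card A' = card B'"
    using phi unfolding iso_def A'_def B'_def commutator_subgroup_def by (auto intro: bij_betw_same_card)
  have q: "card (rcosets\<^bsub>A\<^esub> center A) = card (rcosets\<^bsub>B\<^esub> center B)"
    using psi unfolding iso_def FactGroup_def by (auto intro: bij_betw_same_card)
  have lA: "card (rcosets\<^bsub>A\<^esub> center A) * card (center A) = card (carrier A)"
    using A.lagrange[OF sA] by (simp add: order_def)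
  have lB: "card (rcosets\<^bsub>B\<^esub> center B) * card (center B) = card (carrier B)"
    using B.lagrange[OF sB] by (simp add: order_def)
  have eA: "abel_order A * card A' = card (carrier A)" using abel_order_whole[OF gA fA] unfolding A'_def .
  have eB: "abel_order B * card B' = card (carrier B)" using abel_order_whole[OF gB fB] unfolding B'_def .
  have dpos: "card A' > 0"
  proof -
    have "subgroup A' A" unfolding A'_def by (rule A.derived_is_subgroup) simp
    hence "\<one>\<^bsub>A\<^esub> \<in> A'" "A' \<subseteq> carrier A" by (auto dest: subgroup.one_closed subgroup.subset)
    thus ?thesis using fA by (metis card_gt_0_iff empty_iff rev_finite_subset)
  qed
  have "abel_order B * card (center A) * card A' = abel_order A * card (center B) * card A'"
  proof -
    have "abel_order B * card (center A) * card A' = card (carrier B) * card (center A)"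
      using eB d by (metis mult.assoc mult.commute)
    also have "\<dots> = card (rcosets\<^bsub>B\<^esub> center B) * card (center B) * card (center A)" using lB by simp
    also have "\<dots> = card (carrier A) * card (center B)" using lA q by (metis mult.assoc mult.commute)
    also have "\<dots> = abel_order A * card (center B) * card A'" using eA by (metis mult.assoc mult.commute)
    finally show ?thesis .
  qed
  thus ?thesis using dpos by simp
qed

theorem theorem1p3:
  fixes A :: "('a, 'c) monoid_scheme" and B :: "('b, 'd) monoid_scheme"
  assumes "group A" and "group B"
    and "finite (carrier A)" and "finite (carrier B)"
    and "isoclinic A B"
  shows "(weakly_top A \<longrightarrow> weakly_top B) \<and> (top_group A \<longrightarrow> top_group B)"
proof -
  obtain \<phi> \<psi> where phi: "\<phi> \<in> iso (A\<lparr>carrier := commutator_subgroup A\<rparr>) (B\<lparr>carrier := commutator_subgroup B\<rparr>)"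
    and psi: "\<psi> \<in> iso (A Mod center A) (B Mod center B)"
    and th: "\<forall>u \<in> carrier (A Mod center A). \<forall>v \<in> carrier (A Mod center A).
          \<phi> (theta A u v) = theta B (\<psi> u) (\<psi> v)"
    using assms(5) unfolding isoclinic_def by blast
  have W: "abel_order B * card (center A) = abel_order A * card (center B)"
    by (rule whole[OF assms(1-4) phi psi])
  have zpos: "card (center A) > 0"
  proof -
    have "subgroup (center A) A" by (rule center_subgroup[OF assms(1)])
    hence "\<one>\<^bsub>A\<^esub> \<in> center A" "center A \<subseteq> carrier A" by (auto dest: subgroup.one_closed subgroup.subset)
    thus ?thesis using assms(3) by (metis card_gt_0_iff empty_iff rev_finite_subset)
  qed
  have K: "abel_order (B\<lparr>carrier:=H\<rparr>) < abel_order B \<or>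
     (\<exists>K. subgroup K A \<and> K \<noteq> carrier A \<and>
        abel_order (B\<lparr>carrier:=H\<rparr>) * card (center A) \<le> abel_order (A\<lparr>carrier:=K\<rparr>) * card (center B))"
    if "subgroup H B" "H \<noteq> carrier B" for H
    by (rule key[OF assms(1-4) phi psi th that])
  have 1: "weakly_top B" if wA: "weakly_top A"
    unfolding weakly_top_def
  proof (intro allI impI)
    fix H assume H: "subgroup H B \<and> H \<noteq> carrier B"
    from K[OF conjunct1[OF H] conjunct2[OF H]] show "abel_order (B\<lparr>carrier := H\<rparr>) \<le> abel_order B"
    proof
      assume "abel_order (B\<lparr>carrier:=H\<rparr>) < abel_order B" thus ?thesis by simp
    next
      assume "\<exists>K. subgroup K A \<and> K \<noteq> carrier A \<and>
        abel_order (B\<lparr>carrier:=H\<rparr>) * card (center A) \<le> abel_order (A\<lparr>carrier:=K\<rparr>) * card (center B)"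
      then obtain K where K: "subgroup K A" "K \<noteq> carrier A"
        "abel_order (B\<lparr>carrier:=H\<rparr>) * card (center A) \<le> abel_order (A\<lparr>carrier:=K\<rparr>) * card (center B)"
        by blast
      have "abel_order (A\<lparr>carrier:=K\<rparr>) \<le> abel_order A" using wA K(1,2) unfolding weakly_top_def by blast
      hence "abel_order (A\<lparr>carrier:=K\<rparr>) * card (center B) \<le> abel_order A * card (center B)" by simp
      hence "abel_order (B\<lparr>carrier:=H\<rparr>) * card (center A) \<le> abel_order B * card (center A)"
        using K(3) W by linarith
      thus ?thesis using zpos by simp
    qed
  qed
  have 2: "top_group B" if tA: "top_group A"
    unfolding top_group_def
  proof (intro allI impI)
    fix H assume H: "subgroup H B \<and> H \<noteq> carrier B"
    from K[OF conjunct1[OF H] conjunct2[OF H]] show "abel_order (B\<lparr>carrier := H\<rparr>) < abel_order B"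
    proof
      assume "abel_order (B\<lparr>carrier:=H\<rparr>) < abel_order B" thus ?thesis by simp
    next
      assume "\<exists>K. subgroup K A \<and> K \<noteq> carrier A \<and>
        abel_order (B\<lparr>carrier:=H\<rparr>) * card (center A) \<le> abel_order (A\<lparr>carrier:=K\<rparr>) * card (center B)"
      then obtain K where K: "subgroup K A" "K \<noteq> carrier A"
        "abel_order (B\<lparr>carrier:=H\<rparr>) * card (center A) \<le> abel_order (A\<lparr>carrier:=K\<rparr>) * card (center B)"
        by blast
      have "abel_order (A\<lparr>carrier:=K\<rparr>) < abel_order A" using tA K(1,2) unfolding top_group_def by blast
      moreover have "card (center B) > 0"
      proof -
        have "subgroup (center B) B" by (rule center_subgroup[OF assms(2)])
        hence "\<one>\<^bsub>B\<^esub> \<in> center B" "center B \<subseteq> carrier B" by (auto dest: subgroup.one_closed subgroup.subset)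
        thus ?thesis using assms(4) by (metis card_gt_0_iff empty_iff rev_finite_subset)
      qed
      ultimately have "abel_order (A\<lparr>carrier:=K\<rparr>) * card (center B) < abel_order A * card (center B)" by simp
      hence "abel_order (B\<lparr>carrier:=H\<rparr>) * card (center A) < abel_order B * card (center A)"
        using K(3) W by linarith
      thus ?thesis using zpos by simp
    qed
  qed
  show ?thesis using 1 2 by blast
qed

end
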